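(* Let $f:X\to Y$ be a continuous surjective open map between compact Hausdorff spaces. Then $Hf:HX\to HY$ has a degenerate fiber (a fiber $(Hf)^{-1}(\nu)$ that is a single point) if and only if $f$ has a degenerate fiber (a fiber $f^{-1}(y)$ that is a single point).
   Context: For a compact Hausdorff space $X$, let $HM(X)$ be the set of all maps $\alpha:[0,1)\to X$ for which there exist $0=t_0<t_1<\dots<t_n=1$ such that $\alpha$ is constant on each $[t_i,t_{i+1})$. Let $C(X)$ be the set of continuous real-valued functions on $X$. For $\varphi\in C(X)$ and $0\le a<b\le 1$ define $\varphi_{(a,b)}:HM(X)\to\mathbb{R}$ by $\varphi_{(a,b)}(\alpha)=\frac{1}{b-a}\int_a^b\varphi(\alpha(t))\,dt$, and let $S_{HM}(X)$ be the set of all such functions. The map $\alpha\mapsto(\varphi_{(a,b)}(\alpha))$ embeds $HM(X)$ into the product $\prod_{\varphi_{(a,b)}\in S_{HM}(X)}[\min\varphi,\max\varphi]$; $HX$ is the closure of the image of $HM(X)$, and $p_{\varphi_{(a,b)}}:HX\to\mathbb{R}$ is the coordinate projection. For continuous $f:X\to Y$, $Hf:HX\to HY$ is the unique continuous map with $p_{\varphi_{(a,b)}}\circ Hf=p_{(\varphi\circ f)_{(a,b)}}$ for all $\varphi\in C(Y)$, $0\le a<b\le1$ (it extends $\alpha\mapsto f\circ\alpha$). *)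

theory Defs
  imports "HOL-Analysis.Analysis"
begin

text \<open>HM(X): step maps [0,1) -> X, represented as functions that are
  'undefined' outside [0,1) (so that each map [0,1) -> X has exactly one representative).\<close>
definition HM :: "'a topology \<Rightarrow> (real \<Rightarrow> 'a) set" where
  "HM X = {\<alpha>. (\<forall>t\<in>{0..<1}. \<alpha> t \<in> topspace X) \<and> (\<forall>t. t \<notin> {0..<1} \<longrightarrow> \<alpha> t = undefined) \<and>
     (\<exists>(n::nat) (ts::nat \<Rightarrow> real). ts 0 = 0 \<and> ts n = 1 \<and> (\<forall>i<n. ts i < ts (Suc i)) \<and>
        (\<forall>i<n. \<forall>t\<in>{ts i..<ts (Suc i)}. \<alpha> t = \<alpha> (ts i)))}"

definition avg_fun :: "'a topology \<Rightarrow> ('a \<Rightarrow> real) \<Rightarrow> real \<Rightarrow> real \<Rightarrow> ((real \<Rightarrow> 'a) \<Rightarrow> real)" where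
  "avg_fun X \<phi> a b = (\<lambda>\<alpha>\<in>HM X. (1 / (b - a)) * integral {a..b} (\<lambda>t. \<phi> (\<alpha> t)))"

definition S_HM :: "'a topology \<Rightarrow> ((real \<Rightarrow> 'a) \<Rightarrow> real) set" where
  "S_HM X = {avg_fun X \<phi> a b | \<phi> a b. continuous_map X euclideanreal \<phi> \<and> 0 \<le> a \<and> a < b \<and> b \<le> 1}"

definition H_prod :: "'a topology \<Rightarrow> (((real \<Rightarrow> 'a) \<Rightarrow> real) \<Rightarrow> real) topology" where
  "H_prod X = product_topology (\<lambda>_. euclideanreal) (S_HM X)"

definition H_emb :: "'a topology \<Rightarrow> (real \<Rightarrow> 'a) \<Rightarrow> (((real \<Rightarrow> 'a) \<Rightarrow> real) \<Rightarrow> real)" where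
  "H_emb X \<alpha> = (\<lambda>s\<in>S_HM X. s \<alpha>)"

definition HX :: "'a topology \<Rightarrow> (((real \<Rightarrow> 'a) \<Rightarrow> real) \<Rightarrow> real) topology" where
  "HX X = subtopology (H_prod X) ((H_prod X) closure_of (H_emb X ` HM X))"

text \<open>p_{phi_(a,b)} o Hf = p_{(phi o f)_(a,b)}: the index phi_(a,b) of S_HM(Y) is sent to
  (phi o f)_(a,b), i.e. alpha |-> phi_(a,b)(f o alpha).\<close>
definition H_pull :: "'a topology \<Rightarrow> ('a \<Rightarrow> 'b) \<Rightarrow> ((real \<Rightarrow> 'b) \<Rightarrow> real) \<Rightarrow> ((real \<Rightarrow> 'a) \<Rightarrow> real)" where
  "H_pull X f s = (\<lambda>\<alpha>\<in>HM X. s (\<lambda>t\<in>{0..<1}. f (\<alpha> t)))"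

definition Hmap :: "'a topology \<Rightarrow> 'b topology \<Rightarrow> ('a \<Rightarrow> 'b) \<Rightarrow>
    (((real \<Rightarrow> 'a) \<Rightarrow> real) \<Rightarrow> real) \<Rightarrow> (((real \<Rightarrow> 'b) \<Rightarrow> real) \<Rightarrow> real)" where
  "Hmap X Y f \<nu> = (\<lambda>s\<in>S_HM Y. \<nu> (H_pull X f s))"

definition has_degenerate_fiber :: "'a topology \<Rightarrow> 'b topology \<Rightarrow> ('a \<Rightarrow> 'b) \<Rightarrow> bool" where
  "has_degenerate_fiber X Y g \<longleftrightarrow> (\<exists>y\<in>topspace Y. \<exists>x. {x' \<in> topspace X. g x' = y} = {x})"

end

theory Submission
  imports Defs
begin

lemma ts_mono:
  assumes "\<forall>i<n. ts i < ts (Suc i)" "i \<le> j" "j \<le> n"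
  shows "(ts i::real) \<le> ts j"
  using assms(2,3)
proof (induction j)
  case 0 then show ?case by simp
next
  case (Suc j)
  show ?case
  proof (cases "i = Suc j")
    case True then show ?thesis by simp
  next
    case False
    then have ij: "i \<le> j" using Suc.prems(1) by simp
    have jn: "j < n" using Suc.prems(2) by simp
    have "ts i \<le> ts j" using Suc.IH ij jn by simp
    moreover have "ts j < ts (Suc j)" using assms(1) jn by blast
    ultimately show ?thesis by simp
  qed
qed

lemma HM_D:
  assumes "\<alpha> \<in> HM X"
  obtains n ts where "\<forall>t\<in>{0..<1}. \<alpha> t \<in> topspace X" "\<forall>t. t \<notin> {0..<1} \<longrightarrow> \<alpha> t = undefined"
    "ts 0 = 0" "ts n = (1::real)" "\<forall>i<n. ts i < ts (Suc i)"
    "\<forall>i<n. \<forall>t\<in>{ts i..<ts (Suc i)}. \<alpha> t = \<alpha> (ts i)"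
proof -
  have "(\<forall>t\<in>{0..<1}. \<alpha> t \<in> topspace X) \<and> (\<forall>t. t \<notin> {0..<1} \<longrightarrow> \<alpha> t = undefined) \<and>
     (\<exists>(n::nat) (ts::nat \<Rightarrow> real). ts 0 = 0 \<and> ts n = 1 \<and> (\<forall>i<n. ts i < ts (Suc i)) \<and>
        (\<forall>i<n. \<forall>t\<in>{ts i..<ts (Suc i)}. \<alpha> t = \<alpha> (ts i)))"
    using assms unfolding HM_def by (rule CollectD)
  then show ?thesis using that by (elim conjE exE) 
qed

lemma HM_comp:
  assumes "\<alpha> \<in> HM X" "\<And>x. x \<in> topspace X \<Longrightarrow> G x \<in> topspace Z"
  shows "(\<lambda>t\<in>{0..<1}. G (\<alpha> t)) \<in> HM Z"
proof -
  from assms(1) obtain n ts where A: "\<forall>t\<in>{0..<1}. \<alpha> t \<in> topspace X"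
    and ts: "ts 0 = 0" "ts n = 1" "\<forall>i<n. ts i < ts (Suc i)"
    "\<forall>i<n. \<forall>t\<in>{ts i..<ts (Suc i)}. \<alpha> t = \<alpha> (ts i)"
    by (rule HM_D)
  have "\<forall>i<n. \<forall>t\<in>{ts i..<ts (Suc i)}. (\<lambda>t\<in>{0..<1}. G (\<alpha> t)) t = (\<lambda>t\<in>{0..<1}. G (\<alpha> t)) (ts i)"
  proof (intro allI impI ballI)
    fix i t assume i: "i < n" and t: "t \<in> {ts i..<ts (Suc i)}"
    have "0 \<le> ts i" using ts_mono[OF ts(3), of 0 i] ts(1) i by simp
    moreover have "ts (Suc i) \<le> 1" using ts_mono[OF ts(3), of "Suc i" n] ts(2) i by simp
    moreover have "ts i < ts (Suc i)" using ts(3) i by blast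
    moreover have "\<alpha> t = \<alpha> (ts i)" using ts(4) i t by blast
    ultimately show "(\<lambda>t\<in>{0..<1}. G (\<alpha> t)) t = (\<lambda>t\<in>{0..<1}. G (\<alpha> t)) (ts i)"
      using t by simp
  qed
  moreover have "\<forall>t\<in>{0..<1}. (\<lambda>t\<in>{0..<1}. G (\<alpha> t)) t \<in> topspace Z" using A assms(2) by simp
  moreover have "\<forall>t. t \<notin> {0..<1} \<longrightarrow> (\<lambda>t\<in>{0..<1}. G (\<alpha> t)) t = undefined" by simp
  ultimately show ?thesis unfolding HM_def using ts(1,2,3) by blast
qed

lemma const_HM:
  assumes "x \<in> topspace X" shows "(\<lambda>t\<in>{0..<1}. x) \<in> HM X"
proof -
  have e: "\<forall>i<1. \<forall>t\<in>{real i..<real (Suc i)}. (\<lambda>t\<in>{0..<1::real}. x) t = (\<lambda>t\<in>{0..<1}. x) (real i)"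
    by auto
  have "\<exists>(n::nat) (ts::nat \<Rightarrow> real). ts 0 = 0 \<and> ts n = 1 \<and> (\<forall>i<n. ts i < ts (Suc i)) \<and>
        (\<forall>i<n. \<forall>t\<in>{ts i..<ts (Suc i)}. (\<lambda>t\<in>{0..<1::real}. x) t = (\<lambda>t\<in>{0..<1}. x) (ts i))"
    apply (rule exI[of _ 1], rule exI[of _ real])
    using e by simp
  then show ?thesis unfolding HM_def using assms by simp
qed

lemma step_integrable:
  assumes "\<alpha> \<in> HM X" "0 \<le> a" "b \<le> 1"
  shows "(\<lambda>t. h (\<alpha> t) :: real) integrable_on {a..b}"
proof -
  from assms(1) obtain n ts where 
    ts: "ts 0 = 0" "ts n = 1" "\<forall>i<n. ts i < ts (Suc i)"
    "\<forall>i<n. \<forall>t\<in>{ts i..<ts (Suc i)}. \<alpha> t = \<alpha> (ts i)"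
    by (rule HM_D)
  have "k \<le> n \<Longrightarrow> (\<lambda>t. h (\<alpha> t)) integrable_on {0..ts k}" for k
  proof (induction k)
    case 0 then show ?case using ts(1) integrable_on_refl[of _ 0] by (simp add: cbox_interval)
  next
    case (Suc k)
    have k: "k < n" using Suc by simp
    have sp: "h (\<alpha> t) = h (\<alpha> (ts k))" if "t \<in> {ts k..ts (Suc k)} - {ts (Suc k)}" for t
    proof -
      have "t \<in> {ts k..<ts (Suc k)}" using that by (simp add: less_le)
      then have "\<alpha> t = \<alpha> (ts k)" by (rule ts(4)[rule_format, OF k])
      then show ?thesis by (rule arg_cong)
    qed
    have I2: "(\<lambda>t. h (\<alpha> t)) integrable_on {ts k..ts (Suc k)}"
      by (rule integrable_spike[OF integrable_const_ivl[of "h (\<alpha> (ts k))"] negligible_sing[of "ts (Suc k)"]])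
         (rule sp)
    have L1: "0 \<le> ts k" using ts_mono[OF ts(3), of 0 k] ts(1) k by simp
    have L2: "ts k \<le> ts (Suc k)" using ts(3) k by (simp add: less_imp_le)
    have I1: "(\<lambda>t. h (\<alpha> t)) integrable_on {0..ts k}" using Suc by simp
    show ?case by (rule Henstock_Kurzweil_Integration.integrable_combine[OF L1 L2 I1 I2])
  qed
  from this[of n] have "(\<lambda>t. h (\<alpha> t)) integrable_on {0..1}" using ts(2) by simp
  then show ?thesis by (rule integrable_on_subinterval) (use assms in auto)
qed

lemma integral_eq_01:
  assumes "0 \<le> a" "b \<le> 1" "\<And>t. t \<in> {0..<1} \<Longrightarrow> g t = h t"
  shows "integral {a..b} g = integral {a..b} (h :: real \<Rightarrow> real)"
proof (rule integral_spike[OF negligible_sing[of 1]])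
  fix t assume "t \<in> {a..b} - {1}"
  then have "t \<in> {0..<1}" using assms(1,2) by auto
  then show "h t = g t" using assms(3) by metis
qed

lemma int_le:
  fixes g h :: "'a \<Rightarrow> real"
  assumes "\<alpha> \<in> HM X" "0 \<le> a" "b \<le> 1" "\<And>x. x \<in> topspace X \<Longrightarrow> g x \<le> h x"
  shows "integral {a..b} (\<lambda>t. g (\<alpha> t)) \<le> integral {a..b} (\<lambda>t. h (\<alpha> t))"
proof -
  have A: "\<forall>t\<in>{0..<1}. \<alpha> t \<in> topspace X" using assms(1) by (rule HM_D) 
  define g' where "g' t = (if t \<in> {0..<1} then g (\<alpha> t) else h (\<alpha> t))" for t
  have "integral {a..b} (\<lambda>t. g (\<alpha> t)) = integral {a..b} g'"
    by (rule integral_eq_01[OF assms(2,3)]) (simp add: g'_def)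
  also have "\<dots> \<le> integral {a..b} (\<lambda>t. h (\<alpha> t))"
  proof (rule integral_le)
    show "g' integrable_on {a..b}"
      by (rule integrable_spike[OF step_integrable[OF assms(1-3), of g] negligible_sing[of 1]])
         (use assms(2,3) in \<open>auto simp: g'_def\<close>)
    show "(\<lambda>t. h (\<alpha> t)) integrable_on {a..b}" by (rule step_integrable[OF assms(1-3)])
    fix t assume "t \<in> {a..b}"
    show "g' t \<le> h (\<alpha> t)"
    proof (cases "t \<in> {0..<1}")
      case True
      then have "\<alpha> t \<in> topspace X" using A by blast
      then show ?thesis using True assms(4) by (simp add: g'_def)
    next
      case False then show ?thesis by (auto simp: g'_def)
    qed
  qed
  finally show ?thesis .
qed

lemma avg_const:
  assumes "0 \<le> a" "a < b" "b \<le> 1" "x \<in> topspace X"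
  shows "avg_fun X \<phi> a b (\<lambda>t\<in>{0..<1}. x) = \<phi> x"
proof -
  have "integral {a..b} (\<lambda>t. \<phi> ((\<lambda>t\<in>{0..<1}. x) t)) = integral {a..b} (\<lambda>t. \<phi> x)"
    by (rule integral_eq_01) (use assms in auto)
  then show ?thesis using const_HM[OF assms(4)] assms(2) by (simp add: avg_fun_def)
qed

lemma H_pull_eq:
  assumes "\<And>x. x \<in> topspace X \<Longrightarrow> f x \<in> topspace Y" "0 \<le> a" "b \<le> 1"
  shows "H_pull X f (avg_fun Y \<phi> a b) = avg_fun X (\<phi> \<circ> f) a b"
  unfolding H_pull_def avg_fun_def[of X "\<phi> \<circ> f"]
proof (rule restrict_ext)
  fix \<alpha> assume \<alpha>: "\<alpha> \<in> HM X"
  have "(\<lambda>t\<in>{0..<1}. f (\<alpha> t)) \<in> HM Y" by (rule HM_comp[OF \<alpha> assms(1)])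
  moreover have "integral {a..b} (\<lambda>t. \<phi> ((\<lambda>t\<in>{0..<1}. f (\<alpha> t)) t)) = integral {a..b} (\<lambda>t. (\<phi> \<circ> f) (\<alpha> t))"
    by (rule integral_eq_01[OF assms(2,3)]) simp
  ultimately show "avg_fun Y \<phi> a b (\<lambda>t\<in>{0..<1}. f (\<alpha> t)) = 1 / (b - a) * integral {a..b} (\<lambda>t. (\<phi> \<circ> f) (\<alpha> t))"
    by (simp add: avg_fun_def)
qed

lemma H_pull_in:
  assumes "continuous_map X Y f" "s \<in> S_HM Y"
  shows "H_pull X f s \<in> S_HM X"
proof -
  obtain \<phi> a b where s: "s = avg_fun Y \<phi> a b" "continuous_map Y euclideanreal \<phi>" "0 \<le> a" "a < b" "b \<le> 1"
    using assms(2) unfolding S_HM_def by blast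
  have "H_pull X f s = avg_fun X (\<phi> \<circ> f) a b"
    unfolding s(1) by (rule H_pull_eq) (use assms(1) s in \<open>auto simp: continuous_map_def\<close>)
  moreover have "continuous_map X euclideanreal (\<phi> \<circ> f)"
    using assms(1) s(2) by (rule continuous_map_compose)
  ultimately show ?thesis unfolding S_HM_def using s by blast
qed

lemma emb_top: "H_emb X \<alpha> \<in> topspace (H_prod X)"
  by (simp add: H_emb_def H_prod_def)

lemma emb_apply: "s \<in> S_HM X \<Longrightarrow> H_emb X \<alpha> s = s \<alpha>"
  by (simp add: H_emb_def)

lemma HX_top: "topspace (HX X) = (H_prod X) closure_of (H_emb X ` HM X)"
  unfolding HX_def topspace_subtopology using closure_of_subset_topspace[of "H_prod X" "H_emb X ` HM X"] by blast

lemma emb_in_HX: "\<alpha> \<in> HM X \<Longrightarrow> H_emb X \<alpha> \<in> topspace (HX X)"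
  unfolding HX_top using closure_of_subset[of "H_emb X ` HM X" "H_prod X"] emb_top by blast

lemma proj_cont: "s \<in> S_HM X \<Longrightarrow> continuous_map (H_prod X) euclideanreal (\<lambda>\<nu>. \<nu> s)"
  unfolding H_prod_def by (rule continuous_map_product_projection)

lemma Hmap_cont:
  assumes "continuous_map X Y f"
  shows "continuous_map (H_prod X) (H_prod Y) (Hmap X Y f)"
  unfolding H_prod_def[of Y] continuous_map_componentwise
proof (intro conjI ballI)
  show "Hmap X Y f ` topspace (H_prod X) \<subseteq> extensional (S_HM Y)"
    by (auto simp: Hmap_def)
  fix k assume k: "k \<in> S_HM Y"
  have "continuous_map (H_prod X) euclideanreal (\<lambda>\<nu>. \<nu> (H_pull X f k))"
    by (rule proj_cont[OF H_pull_in[OF assms k]])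
  then show "continuous_map (H_prod X) euclideanreal (\<lambda>x. Hmap X Y f x k)"
    using k by (simp add: Hmap_def)
qed

lemma Hmap_emb:
  assumes "continuous_map X Y f" "\<alpha> \<in> HM X"
  shows "Hmap X Y f (H_emb X \<alpha>) = H_emb Y (\<lambda>t\<in>{0..<1}. f (\<alpha> t))"
  unfolding Hmap_def H_emb_def[of Y]
proof (rule restrict_ext)
  fix s assume s: "s \<in> S_HM Y"
  have "H_emb X \<alpha> (H_pull X f s) = H_pull X f s \<alpha>"
    by (rule emb_apply[OF H_pull_in[OF assms(1) s]])
  also have "\<dots> = s (\<lambda>t\<in>{0..<1}. f (\<alpha> t))" using assms(2) by (simp add: H_pull_def)
  finally show "H_emb X \<alpha> (H_pull X f s) = s (\<lambda>t\<in>{0..<1}. f (\<alpha> t))" .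
qed

lemma Hmap_emb_eq:
  assumes "continuous_map X Y f" "\<alpha> \<in> HM X" "\<beta> \<in> HM X" "\<forall>t\<in>{0..<1}. f (\<beta> t) = f (\<alpha> t)"
  shows "Hmap X Y f (H_emb X \<beta>) = Hmap X Y f (H_emb X \<alpha>)"
proof -
  have "(\<lambda>t\<in>{0..<1}. f (\<beta> t)) = (\<lambda>t\<in>{0..<1}. f (\<alpha> t))"
    using assms(4) by (intro restrict_ext) simp
  then show ?thesis using Hmap_emb[OF assms(1,2)] Hmap_emb[OF assms(1,3)] by simp
qed

lemma bounded_cont:
  assumes "compact_space X" "continuous_map X euclideanreal \<phi>"
  obtains B where "\<And>x. x \<in> topspace X \<Longrightarrow> \<bar>\<phi> x\<bar> \<le> B"
proof -
  have "compactin euclideanreal (\<phi> ` topspace X)"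
    by (rule image_compactin[OF _ assms(2)]) (use assms(1) in \<open>simp add: compact_space_def\<close>)
  then have "bounded (\<phi> ` topspace X)" by (simp add: compact_imp_bounded)
  then show ?thesis using that unfolding bounded_real by blast
qed

lemma avg_bound:
  assumes "compact_space X" "s \<in> S_HM X"
  shows "\<exists>c. \<forall>\<alpha>\<in>HM X. \<bar>s \<alpha>\<bar> \<le> c"
proof -
  obtain \<phi> a b where s: "s = avg_fun X \<phi> a b" "continuous_map X euclideanreal \<phi>" "0 \<le> a" "a < b" "b \<le> 1"
    using assms(2) unfolding S_HM_def by blast
  obtain B where B: "\<And>x. x \<in> topspace X \<Longrightarrow> \<bar>\<phi> x\<bar> \<le> B" using bounded_cont[OF assms(1) s(2)] by blast
  have "\<bar>s \<alpha>\<bar> \<le> B" if \<alpha>: "\<alpha> \<in> HM X" for \<alpha>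
  proof -
    have "integral {a..b} (\<lambda>t. \<phi> (\<alpha> t)) \<le> integral {a..b} (\<lambda>t. (\<lambda>_. B) (\<alpha> t))"
      by (rule int_le[OF \<alpha> s(3,5)]) (use B in force)
    moreover have "integral {a..b} (\<lambda>t. (\<lambda>_. -B) (\<alpha> t)) \<le> integral {a..b} (\<lambda>t. \<phi> (\<alpha> t))"
      by (rule int_le[OF \<alpha> s(3,5)]) (use B in force)
    ultimately have "\<bar>integral {a..b} (\<lambda>t. \<phi> (\<alpha> t))\<bar> \<le> (b - a) * B" using s(4) by simp
    moreover have "s \<alpha> = integral {a..b} (\<lambda>t. \<phi> (\<alpha> t)) / (b - a)" using \<alpha> s(1) by (simp add: avg_fun_def)
    ultimately show ?thesis using s(4) by (simp add: divide_le_eq abs_div mult.commute)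
  qed
  then show ?thesis by blast
qed

lemma HX_compact:
  assumes "compact_space X"
  shows "compact_space (HX X)"
proof -
  define c where "c s = (SOME c::real. \<forall>\<alpha>\<in>HM X. \<bar>s \<alpha>\<bar> \<le> c)" for s :: "(real \<Rightarrow> 'a) \<Rightarrow> real"
  have c: "\<forall>\<alpha>\<in>HM X. \<bar>s \<alpha>\<bar> \<le> c s" if "s \<in> S_HM X" for s
    unfolding c_def by (rule someI_ex[OF avg_bound[OF assms that]])
  define Bx where "Bx = PiE (S_HM X) (\<lambda>s. {-(c s)..c s})"
  have cB: "compactin (H_prod X) Bx"
    unfolding Bx_def H_prod_def compactin_PiE by auto
  have clB: "closedin (H_prod X) Bx"
    by (rule compactin_imp_closedin[OF _ cB]) (simp add: H_prod_def Hausdorff_space_product_topology)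
  have "H_emb X ` HM X \<subseteq> Bx"
  proof
    fix \<nu> assume "\<nu> \<in> H_emb X ` HM X"
    then obtain \<alpha> where \<alpha>: "\<alpha> \<in> HM X" "\<nu> = H_emb X \<alpha>" by blast
    have "\<forall>s\<in>S_HM X. \<nu> s \<in> {-(c s)..c s}"
    proof
      fix s assume s: "s \<in> S_HM X"
      then have "\<bar>s \<alpha>\<bar> \<le> c s" using c \<alpha>(1) by blast
      then show "\<nu> s \<in> {-(c s)..c s}" using \<alpha>(2) emb_apply[OF s] by auto
    qed
    then show "\<nu> \<in> Bx" unfolding Bx_def \<alpha>(2) by (auto simp: H_emb_def)
  qed
  then have "(H_prod X) closure_of (H_emb X ` HM X) \<subseteq> Bx" by (rule closure_of_minimal[OF _ clB])
  then have "compactin (H_prod X) ((H_prod X) closure_of (H_emb X ` HM X))"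
    by (rule closed_compactin[OF cB]) simp
  then show ?thesis unfolding HX_def by (rule compact_space_subtopology)
qed

lemma cr_space:
  assumes "compact_space X" "Hausdorff_space X"
  shows "completely_regular_space X"
  using assms by (simp add: compact_Hausdorff_or_regular_imp_normal_space normal_imp_completely_regular_space)

lemma closedin_le:
  assumes "continuous_map X euclideanreal F" "continuous_map X euclideanreal G"
  shows "closedin X {x \<in> topspace X. F x \<le> G x}"
proof -
  have "continuous_map X euclideanreal (\<lambda>x. G x - F x)"
    using assms by (intro continuous_intros)
  then have "closedin X {x \<in> topspace X. G x - F x \<in> {0..}}"
    by (rule closedin_continuous_map_preimage) simp
  then show ?thesis by simp
qed

lemma back_key:
  assumes X: "compact_space X" "Hausdorff_space X"
    and Y: "compact_space Y" "Hausdorff_space Y"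
    and f: "continuous_map X Y f"
    and y: "y \<in> topspace Y" and fib: "{x' \<in> topspace X. f x' = y} = {x}"
    and \<nu>: "\<nu> \<in> topspace (HX X)" "Hmap X Y f \<nu> = H_emb Y (\<lambda>t\<in>{0..<1}. y)"
    and \<phi>: "continuous_map X euclideanreal \<phi>" and ab: "0 \<le> a" "a < b" "b \<le> 1"
    and \<epsilon>: "\<epsilon> > 0"
  shows "\<bar>\<nu> (avg_fun X \<phi> a b) - \<phi> x\<bar> \<le> \<epsilon>"
proof -
  have x: "x \<in> topspace X" "f x = y" using fib by auto
  have fX: "\<And>x. x \<in> topspace X \<Longrightarrow> f x \<in> topspace Y" using f by (auto simp: continuous_map_def)
  obtain B where B: "\<And>x. x \<in> topspace X \<Longrightarrow> \<bar>\<phi> x\<bar> \<le> B" using bounded_cont[OF X(1) \<phi>] by blast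
  define C where "C = {x' \<in> topspace X. \<bar>\<phi> x' - \<phi> x\<bar> \<in> {\<epsilon>..}}"
  have "continuous_map X euclideanreal (\<lambda>x'. \<bar>\<phi> x' - \<phi> x\<bar>)" using \<phi> by (intro continuous_intros)
  then have "closedin X C" unfolding C_def by (rule closedin_continuous_map_preimage) simp
  then have "compactin X C" using X(1) by (rule closedin_compact_space[rotated])
  then have "compactin Y (f ` C)" using f by (rule image_compactin)
  then have clfC: "closedin Y (f ` C)" using Y(2) compactin_imp_closedin by blast
  have yC: "y \<notin> f ` C"
  proof
    assume "y \<in> f ` C"
    then obtain x' where "x' \<in> C" "f x' = y" by blast
    then have "x' \<in> {x' \<in> topspace X. f x' = y}" unfolding C_def by auto
    then have "x' = x" using fib by blast
    then show False using \<open>x' \<in> C\<close> \<epsilon> unfolding C_def by simp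
  qed
  have "closedin Y (f ` C) \<and> y \<in> topspace Y - f ` C" using clfC y yC by blast
  from cr_space[OF Y, unfolded completely_regular_space_def, rule_format, OF this]
  obtain \<psi> :: "'b \<Rightarrow> real" where \<psi>: "continuous_map Y (top_of_set {0..1}) \<psi>" "\<psi> y = 0" "\<psi> ` (f ` C) \<subseteq> {1}"
    by (elim exE conjE) (rule that)
  have \<psi>c: "continuous_map Y euclideanreal \<psi>" and \<psi>r: "\<And>z. z \<in> topspace Y \<Longrightarrow> \<psi> z \<in> {0..1}"
    using \<psi>(1) by (auto simp: continuous_map_in_subtopology)
  have pw1: "\<phi> x' \<le> (\<phi> x + \<epsilon>) + 2 * B * (\<psi> \<circ> f) x'" if x': "x' \<in> topspace X" for x'
  proof (cases "x' \<in> C")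
    case True
    then have "\<psi> (f x') = 1" using \<psi>(3) by auto
    then show ?thesis using B[OF x'] B[OF x(1)] \<epsilon> by simp
  next
    case False
    then have "\<bar>\<phi> x' - \<phi> x\<bar> < \<epsilon>" using x' unfolding C_def by auto
    then have a1: "\<phi> x' - \<phi> x < \<epsilon>" "\<phi> x - \<phi> x' < \<epsilon>" by (auto simp: abs_less_iff)
    have "\<psi> (f x') \<ge> 0" using \<psi>r[OF fX[OF x']] by simp
    moreover have "B \<ge> 0" using B[OF x'] by simp
    ultimately have "0 \<le> B * \<psi> (f x')" by simp
    then show ?thesis using a1 by simp
  qed
  have pw2: "(\<phi> x - \<epsilon>) + (- 2 * B) * (\<psi> \<circ> f) x' \<le> \<phi> x'" if x': "x' \<in> topspace X" for x'
  proof (cases "x' \<in> C")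
    case True
    then have "\<psi> (f x') = 1" using \<psi>(3) by auto
    then show ?thesis using B[OF x'] B[OF x(1)] \<epsilon> by simp
  next
    case False
    then have "\<bar>\<phi> x' - \<phi> x\<bar> < \<epsilon>" using x' unfolding C_def by auto
    then have a1: "\<phi> x' - \<phi> x < \<epsilon>" "\<phi> x - \<phi> x' < \<epsilon>" by (auto simp: abs_less_iff)
    have "\<psi> (f x') \<ge> 0" using \<psi>r[OF fX[OF x']] by simp
    moreover have "B \<ge> 0" using B[OF x'] by simp
    ultimately have "0 \<le> B * \<psi> (f x')" by simp
    then show ?thesis using a1 by simp
  qed
  define s where "s = avg_fun X \<phi> a b"
  define s2 where "s2 = avg_fun X (\<psi> \<circ> f) a b"
  have sS: "s \<in> S_HM X" unfolding s_def S_HM_def using \<phi> ab by blast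
  have s2S: "s2 \<in> S_HM X" unfolding s2_def S_HM_def using continuous_map_compose[OF f \<psi>c] ab by blast
  have s2eq: "s2 = H_pull X f (avg_fun Y \<psi> a b)" unfolding s2_def by (rule H_pull_eq[symmetric]) (use fX ab in auto)
  have psS: "avg_fun Y \<psi> a b \<in> S_HM Y" unfolding S_HM_def using \<psi>c ab by blast
  have "\<nu> s2 = Hmap X Y f \<nu> (avg_fun Y \<psi> a b)" using psS s2eq by (simp add: Hmap_def)
  also have "\<dots> = avg_fun Y \<psi> a b (\<lambda>t\<in>{0..<1}. y)" using \<nu>(2) emb_apply[OF psS] by simp
  also have "\<dots> = 0" using avg_const[OF ab y] \<psi>(2) by simp
  finally have nu2: "\<nu> s2 = 0" .
  have affine: "integral {a..b} (\<lambda>t. (\<lambda>x'. c + k * (\<psi> \<circ> f) x') (\<alpha> t)) = (b - a) * c + k * integral {a..b} (\<lambda>t. (\<psi> \<circ> f) (\<alpha> t))"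
    if "\<alpha> \<in> HM X" for \<alpha> c k
  proof -
    have "integral {a..b} (\<lambda>t. c + k * (\<psi> \<circ> f) (\<alpha> t)) = integral {a..b} (\<lambda>t. c) + integral {a..b} (\<lambda>t. k * (\<psi> \<circ> f) (\<alpha> t))"
      by (rule integral_add) (use step_integrable[OF that ab(1,3)] in auto)
    then show ?thesis using ab by simp
  qed
  define D where "D = {\<nu>' \<in> topspace (H_prod X). \<nu>' s \<le> (\<phi> x + \<epsilon>) + 2 * B * \<nu>' s2} \<inter>
                      {\<nu>' \<in> topspace (H_prod X). (\<phi> x - \<epsilon>) + (- 2 * B) * \<nu>' s2 \<le> \<nu>' s}"
  have clD: "closedin (H_prod X) D" unfolding D_def
    by (intro closedin_Int closedin_le continuous_intros proj_cont sS s2S)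
  have "H_emb X ` HM X \<subseteq> D"
  proof
    fix \<nu>' assume "\<nu>' \<in> H_emb X ` HM X"
    then obtain \<alpha> where \<alpha>: "\<alpha> \<in> HM X" "\<nu>' = H_emb X \<alpha>" by blast
    define I where "I = integral {a..b} (\<lambda>t. \<phi> (\<alpha> t))"
    define J where "J = integral {a..b} (\<lambda>t. (\<psi> \<circ> f) (\<alpha> t))"
    have e1: "\<nu>' s = I / (b - a)" using \<alpha> emb_apply[OF sS] by (simp add: s_def avg_fun_def I_def)
    have e2: "\<nu>' s2 = J / (b - a)" using \<alpha> emb_apply[OF s2S] by (simp add: s2_def avg_fun_def J_def)
    have i1: "I \<le> (b - a) * (\<phi> x + \<epsilon>) + 2 * B * J"
      unfolding I_def J_def using int_le[where g=\<phi> and h="\<lambda>x'. (\<phi> x + \<epsilon>) + 2 * B * (\<psi> \<circ> f) x'", OF \<alpha>(1) ab(1,3) pw1] affine[OF \<alpha>(1), of "\<phi> x + \<epsilon>" "2 * B"] by linarith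
    have i2: "(b - a) * (\<phi> x - \<epsilon>) + (- 2 * B) * J \<le> I"
      unfolding I_def J_def using int_le[where h=\<phi> and g="\<lambda>x'. (\<phi> x - \<epsilon>) + (- 2 * B) * (\<psi> \<circ> f) x'", OF \<alpha>(1) ab(1,3) pw2] affine[OF \<alpha>(1), of "\<phi> x - \<epsilon>" "- 2 * B"] by linarith
    have L: "b - a > 0" using ab by simp
    have "I / (b - a) \<le> ((b - a) * (\<phi> x + \<epsilon>) + 2 * B * J) / (b - a)"
      by (rule divide_right_mono[OF i1]) (use L in simp)
    also have "\<dots> = (\<phi> x + \<epsilon>) + 2 * B * (J / (b - a))" using L by (simp add: add_divide_distrib)
    finally have "\<nu>' s \<le> (\<phi> x + \<epsilon>) + 2 * B * \<nu>' s2" unfolding e1 e2 .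
    moreover have "(\<phi> x - \<epsilon>) + (- 2 * B) * \<nu>' s2 \<le> \<nu>' s"
    proof -
      have "(\<phi> x - \<epsilon>) + (- 2 * B) * (J / (b - a)) = ((b - a) * (\<phi> x - \<epsilon>) + (- 2 * B) * J) / (b - a)"
        using L by (simp add: add_divide_distrib diff_divide_distrib)
      also have "\<dots> \<le> I / (b - a)" by (rule divide_right_mono[OF i2]) (use L in simp)
      finally show ?thesis unfolding e1 e2 .
    qed
    ultimately show "\<nu>' \<in> D" unfolding D_def using \<alpha>(2) emb_top by auto
  qed
  then have "(H_prod X) closure_of (H_emb X ` HM X) \<subseteq> D" by (rule closure_of_minimal[OF _ clD])
  then have "\<nu> \<in> D" using \<nu>(1) HX_top by blast
  then show ?thesis unfolding D_def s_def[symmetric] using nu2 by auto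
qed

lemma HX_sub: "topspace (HX X) \<subseteq> topspace (H_prod X)"
  unfolding HX_top by (rule closure_of_subset_topspace)

lemma back_dir:
  assumes X: "compact_space X" "Hausdorff_space X"
    and Y: "compact_space Y" "Hausdorff_space Y"
    and f: "continuous_map X Y f"
    and y: "y \<in> topspace Y" and fib: "{x' \<in> topspace X. f x' = y} = {x}"
  shows "has_degenerate_fiber (HX X) (HX Y) (Hmap X Y f)"
proof -
  have x: "x \<in> topspace X" "f x = y" using fib by auto
  define cx where "cx = (\<lambda>t\<in>{0..<1::real}. x)"
  define cy where "cy = (\<lambda>t\<in>{0..<1::real}. y)"
  have cx: "cx \<in> HM X" unfolding cx_def by (rule const_HM[OF x(1)])
  have cy: "cy \<in> HM Y" unfolding cy_def by (rule const_HM[OF y])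
  have "(\<lambda>t\<in>{0..<1}. f (cx t)) = cy" unfolding cx_def cy_def using x(2) by (intro restrict_ext) simp
  then have Hc: "Hmap X Y f (H_emb X cx) = H_emb Y cy" using Hmap_emb[OF f cx] by simp
  have "{\<nu> \<in> topspace (HX X). Hmap X Y f \<nu> = H_emb Y cy} = {H_emb X cx}"
  proof (intro equalityI subsetI)
    fix \<nu> assume "\<nu> \<in> {\<nu> \<in> topspace (HX X). Hmap X Y f \<nu> = H_emb Y cy}"
    then have \<nu>: "\<nu> \<in> topspace (HX X)" "Hmap X Y f \<nu> = H_emb Y cy" by auto
    have "\<nu> = H_emb X cx"
    proof (rule PiE_ext)
      show "\<nu> \<in> PiE (S_HM X) (\<lambda>_. UNIV)" using HX_sub \<nu>(1) by (auto simp: H_prod_def)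
      show "H_emb X cx \<in> PiE (S_HM X) (\<lambda>_. UNIV)" using emb_top[of X cx] by (simp add: H_prod_def)
      fix s assume s: "s \<in> S_HM X"
      then obtain \<phi> a b where sd: "s = avg_fun X \<phi> a b" "continuous_map X euclideanreal \<phi>" "0 \<le> a" "a < b" "b \<le> 1"
        unfolding S_HM_def by blast
      have e: "H_emb X cx s = \<phi> x" using emb_apply[OF s] avg_const[OF sd(3,4,5) x(1)] sd(1) by (simp add: cx_def)
      have k: "\<bar>\<nu> s - \<phi> x\<bar> \<le> \<epsilon>" if "\<epsilon> > 0" for \<epsilon>
        unfolding sd(1) by (rule back_key[OF X Y f y fib \<nu>(1) \<nu>(2)[unfolded cy_def] sd(2-5) that])
      have "\<nu> s = \<phi> x"
      proof (rule ccontr)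
        assume "\<nu> s \<noteq> \<phi> x"
        then have "\<bar>\<nu> s - \<phi> x\<bar> > 0" by simp
        from k[OF half_gt_zero[OF this]] this show False by simp
      qed
      then show "\<nu> s = H_emb X cx s" using e by simp
    qed
    then show "\<nu> \<in> {H_emb X cx}" by simp
  next
    fix \<nu> assume "\<nu> \<in> {H_emb X cx}"
    then show "\<nu> \<in> {\<nu> \<in> topspace (HX X). Hmap X Y f \<nu> = H_emb Y cy}"
      using emb_in_HX[OF cx] Hc by simp
  qed
  then show ?thesis unfolding has_degenerate_fiber_def using emb_in_HX[OF cy] by blast
qed

lemma fiber_nbhd:
  assumes X: "compact_space X" and f: "continuous_map X Y f"
    and \<nu>0: "\<nu>0 \<in> topspace (H_prod Y)"
    and fib: "{\<nu>' \<in> topspace (HX X). Hmap X Y f \<nu>' = \<nu>0} = {\<nu>}"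
    and N: "openin (H_prod X) N" "\<nu> \<in> N"
  shows "\<exists>\<alpha>\<in>HM X. \<forall>\<beta>\<in>HM X. (\<forall>t\<in>{0..<1}. f (\<beta> t) = f (\<alpha> t)) \<longrightarrow> H_emb X \<beta> \<in> N"
proof -
  have \<nu>: "\<nu> \<in> topspace (HX X)" "Hmap X Y f \<nu> = \<nu>0" using fib by auto
  define K where "K = topspace (HX X) - N"
  have "openin (HX X) (N \<inter> (H_prod X) closure_of (H_emb X ` HM X))"
    unfolding HX_def using N(1) by (rule openin_subtopology_Int)
  moreover have "topspace (HX X) - K = N \<inter> (H_prod X) closure_of (H_emb X ` HM X)"
    unfolding K_def HX_top by blast
  ultimately have "closedin (HX X) K" unfolding closedin_def K_def by auto
  then have cK: "compactin (HX X) K" using HX_compact[OF X] by (rule closedin_compact_space[rotated])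
  have cm: "continuous_map (HX X) (H_prod Y) (Hmap X Y f)"
    unfolding HX_def by (rule continuous_map_from_subtopology[OF Hmap_cont[OF f]])
  have "compactin (H_prod Y) (Hmap X Y f ` K)" by (rule image_compactin[OF cK cm])
  then have clK: "closedin (H_prod Y) (Hmap X Y f ` K)"
    by (rule compactin_imp_closedin[rotated]) (simp add: H_prod_def Hausdorff_space_product_topology)
  have nK: "\<nu>0 \<notin> Hmap X Y f ` K"
  proof
    assume "\<nu>0 \<in> Hmap X Y f ` K"
    then obtain \<nu>' where "\<nu>' \<in> K" "Hmap X Y f \<nu>' = \<nu>0" by blast
    then have "\<nu>' \<in> {\<nu>' \<in> topspace (HX X). Hmap X Y f \<nu>' = \<nu>0}" unfolding K_def by blast
    then have "\<nu>' = \<nu>" using fib by blast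
    then show False using \<open>\<nu>' \<in> K\<close> N(2) unfolding K_def by blast
  qed
  define M where "M = topspace (H_prod Y) - Hmap X Y f ` K"
  have oM: "openin (H_prod Y) M" unfolding M_def using clK by (rule openin_diff[OF openin_topspace])
  define P where "P = {\<nu>' \<in> topspace (H_prod X). Hmap X Y f \<nu>' \<in> M}"
  have oP: "openin (H_prod X) P" unfolding P_def by (rule openin_continuous_map_preimage[OF Hmap_cont[OF f] oM])
  have "\<nu> \<in> P" unfolding P_def M_def using \<nu> HX_sub \<nu>0 nK by blast
  moreover have "\<nu> \<in> (H_prod X) closure_of (H_emb X ` HM X)" using \<nu>(1) HX_top by blast
  ultimately obtain \<zeta> where "\<zeta> \<in> H_emb X ` HM X" "\<zeta> \<in> P" using oP unfolding in_closure_of by blast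
  then obtain \<alpha> where \<alpha>: "\<alpha> \<in> HM X" "H_emb X \<alpha> \<in> P" by blast
  have "H_emb X \<beta> \<in> N" if \<beta>: "\<beta> \<in> HM X" "\<forall>t\<in>{0..<1}. f (\<beta> t) = f (\<alpha> t)" for \<beta>
  proof (rule ccontr)
    assume "H_emb X \<beta> \<notin> N"
    then have "H_emb X \<beta> \<in> K" unfolding K_def using emb_in_HX[OF \<beta>(1)] by blast
    then have "Hmap X Y f (H_emb X \<beta>) \<notin> M" unfolding M_def by blast
    moreover have "Hmap X Y f (H_emb X \<beta>) = Hmap X Y f (H_emb X \<alpha>)" by (rule Hmap_emb_eq[OF f \<alpha>(1) \<beta>])
    ultimately show False using \<alpha>(2) unfolding P_def by simp
  qed
  then show ?thesis using \<alpha>(1) by blast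
qed

lemma local_sep:
  assumes X: "compact_space X" "Hausdorff_space X"
    and f: "continuous_map X Y f" "open_map X Y f"
    and p: "p \<in> topspace X" and q: "q \<in> topspace X" "p \<noteq> q" "f p = y" "f q = y"
  shows "\<exists>\<phi> W. continuous_map X euclideanreal \<phi> \<and> openin Y W \<and> y \<in> W \<and>
     (\<forall>y'\<in>W. \<exists>p'\<in>topspace X. \<exists>q'\<in>topspace X. f p' = y' \<and> f q' = y' \<and> \<phi> p' < 1/3 \<and> 2/3 < \<phi> q')"
proof -
  have "closedin X {q} \<and> p \<in> topspace X - {q}" using closedin_Hausdorff_singleton[OF X(2) q(1)] p q(2) by blast
  from cr_space[OF X, unfolded completely_regular_space_def, rule_format, OF this]
  obtain \<phi> :: "'a \<Rightarrow> real" where \<phi>: "continuous_map X (top_of_set {0..1}) \<phi>" "\<phi> p = 0" "\<phi> ` {q} \<subseteq> {1}"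
    by (elim exE conjE) (rule that)
  have \<phi>c: "continuous_map X euclideanreal \<phi>" using \<phi>(1) by (auto simp: continuous_map_in_subtopology)
  define U1 where "U1 = {x \<in> topspace X. \<phi> x \<in> {..<1/3}}"
  define U2 where "U2 = {x \<in> topspace X. \<phi> x \<in> {2/3<..}}"
  have o1: "openin X U1" unfolding U1_def by (rule openin_continuous_map_preimage[OF \<phi>c]) simp
  have o2: "openin X U2" unfolding U2_def by (rule openin_continuous_map_preimage[OF \<phi>c]) simp
  define W where "W = f ` U1 \<inter> f ` U2"
  have "openin Y W" unfolding W_def using f(2) o1 o2 unfolding open_map_def by blast
  moreover have "y \<in> W"
  proof -
    have "p \<in> U1" unfolding U1_def using p \<phi>(2) by simp
    moreover have "q \<in> U2" unfolding U2_def using q(1) \<phi>(3) by simp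
    ultimately show ?thesis unfolding W_def using q(3,4) by (metis IntI image_eqI)
  qed
  moreover have "\<forall>y'\<in>W. \<exists>p'\<in>topspace X. \<exists>q'\<in>topspace X. f p' = y' \<and> f q' = y' \<and> \<phi> p' < 1/3 \<and> 2/3 < \<phi> q'"
    unfolding W_def U1_def U2_def by fastforce
  ultimately show ?thesis using \<phi>c by blast
qed

lemma avg01:
  assumes "\<alpha> \<in> HM X" "\<And>x. x \<in> topspace X \<Longrightarrow> G x \<in> topspace X"
  shows "avg_fun X \<phi> 0 1 (\<lambda>t\<in>{0..<1}. G (\<alpha> t)) = integral {0..1} (\<lambda>t. (\<phi> \<circ> G) (\<alpha> t))"
proof -
  have "(\<lambda>t\<in>{0..<1}. G (\<alpha> t)) \<in> HM X" by (rule HM_comp[OF assms])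
  moreover have "integral {0..1} (\<lambda>t. \<phi> ((\<lambda>t\<in>{0..<1}. G (\<alpha> t)) t)) = integral {0..1} (\<lambda>t. (\<phi> \<circ> G) (\<alpha> t))"
    by (rule integral_eq_01) auto
  ultimately show ?thesis by (simp add: avg_fun_def)
qed

lemma sum_int_lemma:
  fixes \<Phi> :: "'k \<Rightarrow> 'a \<Rightarrow> real"
  assumes \<alpha>: "\<alpha> \<in> HM X" and fin: "finite Ys"
    and kidx: "\<And>x. x \<in> topspace X \<Longrightarrow> kidx x \<in> Ys"
    and G1: "\<And>k x. x \<in> topspace X \<Longrightarrow> G1 k x \<in> topspace X"
    and G2: "\<And>k x. x \<in> topspace X \<Longrightarrow> G2 k x \<in> topspace X"
    and same: "\<And>k x. x \<in> topspace X \<Longrightarrow> kidx x \<noteq> k \<Longrightarrow> G1 k x = x \<and> G2 k x = x"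
    and gap: "\<And>x. x \<in> topspace X \<Longrightarrow> 1/3 \<le> \<Phi> (kidx x) (G2 (kidx x) x) - \<Phi> (kidx x) (G1 (kidx x) x)"
  shows "1/3 \<le> (\<Sum>k\<in>Ys. avg_fun X (\<Phi> k) 0 1 (\<lambda>t\<in>{0..<1}. G2 k (\<alpha> t)) - avg_fun X (\<Phi> k) 0 1 (\<lambda>t\<in>{0..<1}. G1 k (\<alpha> t)))"
proof -
  define H where "H k x = (\<Phi> k \<circ> G2 k) x - (\<Phi> k \<circ> G1 k) x" for k x
  have D: "avg_fun X (\<Phi> k) 0 1 (\<lambda>t\<in>{0..<1}. G2 k (\<alpha> t)) - avg_fun X (\<Phi> k) 0 1 (\<lambda>t\<in>{0..<1}. G1 k (\<alpha> t))
      = integral {0..1} (\<lambda>t. H k (\<alpha> t))" for k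
  proof -
    have "integral {0..1} (\<lambda>t. H k (\<alpha> t)) = integral {0..1} (\<lambda>t. (\<Phi> k \<circ> G2 k) (\<alpha> t)) - integral {0..1} (\<lambda>t. (\<Phi> k \<circ> G1 k) (\<alpha> t))"
      unfolding H_def by (rule integral_diff) (rule step_integrable[OF \<alpha>]; simp)+
    then show ?thesis using avg01[where G="G1 k" and \<phi>="\<Phi> k", OF \<alpha> G1] avg01[where G="G2 k" and \<phi>="\<Phi> k", OF \<alpha> G2] by simp
  qed
  have "(\<Sum>k\<in>Ys. integral {0..1} (\<lambda>t. H k (\<alpha> t))) = integral {0..1} (\<lambda>t. \<Sum>k\<in>Ys. H k (\<alpha> t))"
    by (rule integral_sum[symmetric, OF fin]) (rule step_integrable[OF \<alpha>]; simp)
  also have "integral {0..1} (\<lambda>t. (\<lambda>_. 1/3) (\<alpha> t)) \<le> integral {0..1} (\<lambda>t. (\<lambda>x. \<Sum>k\<in>Ys. H k x) (\<alpha> t))"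
  proof (rule int_le[OF \<alpha>])
    fix x assume x: "x \<in> topspace X"
    have "(\<Sum>k\<in>Ys. H k x) = (\<Sum>k\<in>Ys. if k = kidx x then H (kidx x) x else 0)"
    proof (rule sum.cong[OF refl])
      fix k assume "k \<in> Ys"
      show "H k x = (if k = kidx x then H (kidx x) x else 0)"
        using same[OF x, of k] by (auto simp: H_def)
    qed
    also have "\<dots> = H (kidx x) x" using sum.delta[OF fin, of "kidx x" "\<lambda>_. H (kidx x) x"] kidx[OF x] by simp
    finally show "1/3 \<le> (\<Sum>k\<in>Ys. H k x)" using gap[OF x] by (simp add: H_def)
  qed auto
  then have "1/3 \<le> integral {0..1} (\<lambda>t. \<Sum>k\<in>Ys. H k (\<alpha> t))" by simp
  ultimately show ?thesis using D by simp
qed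

lemma forth_dir:
  assumes X: "compact_space X" "Hausdorff_space X"
    and Y: "compact_space Y" "Hausdorff_space Y"
    and f: "continuous_map X Y f" "f ` topspace X = topspace Y" "open_map X Y f"
    and deg: "has_degenerate_fiber (HX X) (HX Y) (Hmap X Y f)"
  shows "has_degenerate_fiber X Y f"
proof (rule ccontr)
  assume nd: "\<not> has_degenerate_fiber X Y f"
  from deg obtain \<nu>0 \<nu> where \<nu>0: "\<nu>0 \<in> topspace (HX Y)"
    and fib: "{\<nu>' \<in> topspace (HX X). Hmap X Y f \<nu>' = \<nu>0} = {\<nu>}"
    unfolding has_degenerate_fiber_def by blast
  have fX: "\<And>x. x \<in> topspace X \<Longrightarrow> f x \<in> topspace Y" using f(1) by (auto simp: continuous_map_def)
  define Q where "Q y \<phi> W \<longleftrightarrow> continuous_map X euclideanreal \<phi> \<and> openin Y W \<and> y \<in> W \<and>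
     (\<forall>y'\<in>W. \<exists>p'\<in>topspace X. \<exists>q'\<in>topspace X. f p' = y' \<and> f q' = y' \<and> \<phi> p' < 1/3 \<and> 2/3 < \<phi> q')"
    for y \<phi> W
  have exQ: "\<exists>\<phi> W. Q y \<phi> W" if y: "y \<in> topspace Y" for y
  proof -
    have "y \<in> f ` topspace X" using f(2) y by simp
    then obtain p where p: "p \<in> topspace X" "f p = y" by (elim imageE) simp
    have "\<exists>q. q \<in> topspace X \<and> f q = y \<and> p \<noteq> q"
    proof (rule ccontr)
      assume "\<nexists>q. q \<in> topspace X \<and> f q = y \<and> p \<noteq> q"
      then have "{x' \<in> topspace X. f x' = y} = {p}" using p by blast
      then show False using nd y unfolding has_degenerate_fiber_def by blast
    qed
    then obtain q where q: "q \<in> topspace X" "p \<noteq> q" "f p = y" "f q = y" using p by blast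
    show ?thesis unfolding Q_def by (rule local_sep[OF X f(1,3) p(1) q])
  qed
  define \<Phi> where "\<Phi> y = (SOME \<phi>. \<exists>W. Q y \<phi> W)" for y
  define Wf where "Wf y = (SOME W. Q y (\<Phi> y) W)" for y
  have QQ: "Q y (\<Phi> y) (Wf y)" if "y \<in> topspace Y" for y
  proof -
    have "\<exists>W. Q y (\<Phi> y) W" unfolding \<Phi>_def by (rule someI_ex[OF exQ[OF that]])
    then show ?thesis unfolding Wf_def by (rule someI_ex[of "\<lambda>W. Q y (\<Phi> y) W"])
  qed
  have "compactin Y (topspace Y)" using Y(1) by (simp add: compact_space_def)
  moreover have "\<forall>B\<in>Wf ` topspace Y. openin Y B" using QQ unfolding Q_def by blast
  moreover have "topspace Y \<subseteq> \<Union>(Wf ` topspace Y)" using QQ unfolding Q_def by blast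
  ultimately obtain F where F: "finite F" "F \<subseteq> Wf ` topspace Y" "topspace Y \<subseteq> \<Union>F"
    unfolding compactin_def by meson
  from finite_subset_image[OF F(1,2)] obtain Ys where Ys: "Ys \<subseteq> topspace Y" "finite Ys" "F = Wf ` Ys"
    by blast
  have cov: "\<exists>k\<in>Ys. f x \<in> Wf k" if "x \<in> topspace X" for x
    using F(3) Ys(3) fX[OF that] by blast
  have "\<nu> \<in> (H_prod X) closure_of (H_emb X ` HM X)" using fib HX_top by blast
  then have "HM X \<noteq> {}" by auto
  then obtain \<alpha>0 where \<alpha>0: "\<alpha>0 \<in> HM X" by blast
  have "\<forall>t\<in>{0..<1}. \<alpha>0 t \<in> topspace X" using \<alpha>0 by (rule HM_D)
  then have "\<alpha>0 0 \<in> topspace X" by simp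
  then have Yne: "Ys \<noteq> {}" using cov by blast
  have cardpos: "card Ys > 0" using Ys(2) Yne by (simp add: card_gt_0_iff)
  define \<epsilon> :: real where "\<epsilon> = 1 / (7 * card Ys)"
  have \<epsilon>pos: "\<epsilon> > 0" unfolding \<epsilon>_def using cardpos by simp
  define sk where "sk k = avg_fun X (\<Phi> k) 0 1" for k
  have skS: "sk k \<in> S_HM X" if "k \<in> Ys" for k
  proof -
    have "k \<in> topspace Y" using that Ys(1) by blast
    then have "Q k (\<Phi> k) (Wf k)" by (rule QQ)
    then have c: "continuous_map X euclideanreal (\<Phi> k)" unfolding Q_def by (elim conjE)
    have "(0::real) \<le> 0" "(0::real) < 1" "(1::real) \<le> 1" by simp_all
    then show ?thesis unfolding sk_def S_HM_def using c by blast
  qed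
  define N where "N = (\<Inter>k\<in>Ys. {\<nu>' \<in> topspace (H_prod X). \<nu>' (sk k) \<in> {\<nu> (sk k) - \<epsilon> <..< \<nu> (sk k) + \<epsilon>}})"
  have oN: "openin (H_prod X) N" unfolding N_def
  proof (rule openin_INT2[OF Ys(2) Yne])
    fix k assume "k \<in> Ys"
    show "openin (H_prod X) {\<nu>' \<in> topspace (H_prod X). \<nu>' (sk k) \<in> {\<nu> (sk k) - \<epsilon> <..< \<nu> (sk k) + \<epsilon>}}"
      by (rule openin_continuous_map_preimage[OF proj_cont[OF skS[OF \<open>k \<in> Ys\<close>]]]) (simp flip: open_openin)
  qed
  have "\<nu> \<in> topspace (H_prod X)" using fib HX_sub by blast
  then have \<nu>N: "\<nu> \<in> N" unfolding N_def using \<epsilon>pos by simp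
  have \<nu>0': "\<nu>0 \<in> topspace (H_prod Y)" using \<nu>0 HX_sub by blast
  obtain \<alpha> where \<alpha>: "\<alpha> \<in> HM X" and \<alpha>N: "\<And>\<beta>. \<beta> \<in> HM X \<Longrightarrow> (\<forall>t\<in>{0..<1}. f (\<beta> t) = f (\<alpha> t)) \<Longrightarrow> H_emb X \<beta> \<in> N"
    using fiber_nbhd[OF X(1) f(1) \<nu>0' fib oN \<nu>N] by blast
  define kidx where "kidx x = (SOME k. k \<in> Ys \<and> f x \<in> Wf k)" for x
  have kidx: "kidx x \<in> Ys \<and> f x \<in> Wf (kidx x)" if "x \<in> topspace X" for x
    unfolding kidx_def by (rule someI_ex) (use cov[OF that] in blast)
  define P1 where "P1 k x = (SOME p. p \<in> topspace X \<and> f p = f x \<and> \<Phi> k p < 1/3)" for k x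
  define P2 where "P2 k x = (SOME p. p \<in> topspace X \<and> f p = f x \<and> 2/3 < \<Phi> k p)" for k x
  have P12: "(P1 (kidx x) x \<in> topspace X \<and> f (P1 (kidx x) x) = f x \<and> \<Phi> (kidx x) (P1 (kidx x) x) < 1/3) \<and>
             (P2 (kidx x) x \<in> topspace X \<and> f (P2 (kidx x) x) = f x \<and> 2/3 < \<Phi> (kidx x) (P2 (kidx x) x))"
    if x: "x \<in> topspace X" for x
  proof -
    have k: "kidx x \<in> Ys" "f x \<in> Wf (kidx x)" using kidx[OF x] by auto
    have "Q (kidx x) (\<Phi> (kidx x)) (Wf (kidx x))" using QQ k(1) Ys(1) by blast
    then have "\<exists>p'\<in>topspace X. \<exists>q'\<in>topspace X. f p' = f x \<and> f q' = f x \<and> \<Phi> (kidx x) p' < 1/3 \<and> 2/3 < \<Phi> (kidx x) q'"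
      using k(2) unfolding Q_def by blast
    then have e1: "\<exists>p. p \<in> topspace X \<and> f p = f x \<and> \<Phi> (kidx x) p < 1/3"
      and e2: "\<exists>p. p \<in> topspace X \<and> f p = f x \<and> 2/3 < \<Phi> (kidx x) p" by blast+
    show ?thesis unfolding P1_def P2_def using someI_ex[OF e1] someI_ex[OF e2] by blast
  qed
  define G1 where "G1 k x = (if kidx x = k then P1 k x else x)" for k x
  define G2 where "G2 k x = (if kidx x = k then P2 k x else x)" for k x
  have G1: "G1 k x \<in> topspace X \<and> f (G1 k x) = f x" if "x \<in> topspace X" for k x
    unfolding G1_def using P12[OF that] that by auto
  have G2: "G2 k x \<in> topspace X \<and> f (G2 k x) = f x" if "x \<in> topspace X" for k x
    unfolding G2_def using P12[OF that] that by auto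
  have A: "\<forall>t\<in>{0..<1}. \<alpha> t \<in> topspace X" using \<alpha> by (rule HM_D)
  have close: "\<bar>sk k (\<lambda>t\<in>{0..<1}. G k (\<alpha> t)) - \<nu> (sk k)\<bar> < \<epsilon>"
    if k: "k \<in> Ys" and G: "\<And>x. x \<in> topspace X \<Longrightarrow> G k x \<in> topspace X \<and> f (G k x) = f x" for k G
  proof -
    have \<beta>: "(\<lambda>t\<in>{0..<1}. G k (\<alpha> t)) \<in> HM X" by (rule HM_comp[OF \<alpha>]) (use G in blast)
    have "\<forall>t\<in>{0..<1}. f ((\<lambda>t\<in>{0..<1}. G k (\<alpha> t)) t) = f (\<alpha> t)" using A G by simp
    then have "H_emb X (\<lambda>t\<in>{0..<1}. G k (\<alpha> t)) \<in> N" by (rule \<alpha>N[OF \<beta>])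
    then have "H_emb X (\<lambda>t\<in>{0..<1}. G k (\<alpha> t)) (sk k) \<in> {\<nu> (sk k) - \<epsilon> <..< \<nu> (sk k) + \<epsilon>}"
      unfolding N_def using k by blast
    then show ?thesis using emb_apply[OF skS[OF k]] by (simp add: abs_less_iff)
  qed
  have lt: "sk k (\<lambda>t\<in>{0..<1}. G2 k (\<alpha> t)) - sk k (\<lambda>t\<in>{0..<1}. G1 k (\<alpha> t)) < 2 * \<epsilon>" if k: "k \<in> Ys" for k
    using close[OF k, of G1] close[OF k, of G2] G1 G2 by (simp add: abs_less_iff)
  have "1/3 \<le> (\<Sum>k\<in>Ys. avg_fun X (\<Phi> k) 0 1 (\<lambda>t\<in>{0..<1}. G2 k (\<alpha> t)) - avg_fun X (\<Phi> k) 0 1 (\<lambda>t\<in>{0..<1}. G1 k (\<alpha> t)))"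
  proof (rule sum_int_lemma[OF \<alpha> Ys(2)])
    show "\<And>x. x \<in> topspace X \<Longrightarrow> kidx x \<in> Ys" using kidx by blast
    show "\<And>k x. x \<in> topspace X \<Longrightarrow> G1 k x \<in> topspace X" using G1 by blast
    show "\<And>k x. x \<in> topspace X \<Longrightarrow> G2 k x \<in> topspace X" using G2 by blast
    show "\<And>k x. x \<in> topspace X \<Longrightarrow> kidx x \<noteq> k \<Longrightarrow> G1 k x = x \<and> G2 k x = x" by (simp add: G1_def G2_def)
    fix x assume x: "x \<in> topspace X"
    show "1/3 \<le> \<Phi> (kidx x) (G2 (kidx x) x) - \<Phi> (kidx x) (G1 (kidx x) x)"
      using P12[OF x] by (simp add: G1_def G2_def)
  qed
  also have "\<dots> < (\<Sum>k\<in>Ys. 2 * \<epsilon>)"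
    by (rule sum_strict_mono[OF Ys(2) Yne]) (use lt in \<open>simp add: sk_def\<close>)
  also have "\<dots> = 2 / 7" unfolding \<epsilon>_def using cardpos by simp
  finally show False by simp
qed

theorem lemma4p1:
  fixes X :: "'a topology" and Y :: "'b topology" and f :: "'a \<Rightarrow> 'b"
  assumes "compact_space X" and "Hausdorff_space X"
    and "compact_space Y" and "Hausdorff_space Y"
    and "continuous_map X Y f" and "f ` topspace X = topspace Y" and "open_map X Y f"
  shows "has_degenerate_fiber (HX X) (HX Y) (Hmap X Y f) \<longleftrightarrow> has_degenerate_fiber X Y f"
proof
  assume "has_degenerate_fiber (HX X) (HX Y) (Hmap X Y f)"
  then show "has_degenerate_fiber X Y f" by (rule forth_dir[OF assms])
next
  assume "has_degenerate_fiber X Y f"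
  then obtain y x where "y \<in> topspace Y" "{x' \<in> topspace X. f x' = y} = {x}"
    unfolding has_degenerate_fiber_def by blast
  then show "has_degenerate_fiber (HX X) (HX Y) (Hmap X Y f)"
    by (rule back_dir[OF assms(1-5)])
qed

end
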